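(* The average running time $\mathbb{T}(n,p)$ of exhaustive search for maximum independent set on a random graph $G\sim\mathcal{G}(n,p)$ of order $n$ is: (1) subexponential in $n$ when $p$ is a fixed constant, or when $p=\phi(n)/n$ for some function $\phi$ with $\phi(n)=o(n)$ and $\phi(n)\to\infty$ as $n\to\infty$; (2) exponential in $n$ when $p=k/n$ for a fixed constant $k>0$.
   Context: $\mathcal{G}(n,p)$ is the binomial random graph on $n$ vertices in which each of the $\binom{n}{2}$ pairs of vertices is an edge with probability $p$, independently. Exhaustive search processes the vertices in a fixed order $v_1,\dots,v_n$ and builds a binary search tree: a node at level $i$ corresponds to a subset $P\subseteq\{v_1,\dots,v_i\}$, and it has the two children $P\cup\{v_{i+1}\}$ and $P$ at level $i+1$; a node is kept (and expanded) only if its subset is an independent set of $G$. $\mathbb{T}(n,p)$ denotes the expected number of nodes of this search tree when $G\sim\mathcal{G}(n,p)$. *)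

theory Defs
  imports "HOL-Probability.Probability"
begin

text \<open>Vertices v_1..v_n are represented by 0..n-1. A graph on these vertices is
  a function from the unordered pairs (u,v) with u < v < n to bool (edge or not);
  outside these pairs it is False.\<close>

definition vertex_pairs :: "nat \<Rightarrow> (nat \<times> nat) set" where
  "vertex_pairs n = {(u, v). u < v \<and> v < n}"

definition gnp :: "nat \<Rightarrow> real \<Rightarrow> (nat \<times> nat \<Rightarrow> bool) pmf" where
  "gnp n p = Pi_pmf (vertex_pairs n) False (\<lambda>_. bernoulli_pmf p)"

definition indep_set :: "(nat \<times> nat \<Rightarrow> bool) \<Rightarrow> nat set \<Rightarrow> bool" where
  "indep_set G P \<longleftrightarrow> (\<forall>u\<in>P. \<forall>v\<in>P. u < v \<longrightarrow> \<not> G (u, v))"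

text \<open>Nodes of the exhaustive search tree: a node at level i (0 \<le> i \<le> n) is a subset
  P of {v_1,...,v_i} (= {0..<i}) which is independent in G.\<close>
definition search_tree_nodes :: "nat \<Rightarrow> (nat \<times> nat \<Rightarrow> bool) \<Rightarrow> (nat \<times> nat set) set" where
  "search_tree_nodes n G = {(i, P). i \<le> n \<and> P \<subseteq> {0..<i} \<and> indep_set G P}"

definition T :: "nat \<Rightarrow> real \<Rightarrow> real" where
  "T n p = measure_pmf.expectation (gnp n p) (\<lambda>G. real (card (search_tree_nodes n G)))"

definition subexponential :: "(nat \<Rightarrow> real) \<Rightarrow> bool" where
  "subexponential f \<longleftrightarrow> (\<forall>\<epsilon>>0. eventually (\<lambda>n. f n \<le> exp (\<epsilon> * real n)) sequentially)"

definition exponential :: "(nat \<Rightarrow> real) \<Rightarrow> bool" where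
  "exponential f \<longleftrightarrow> (\<exists>c>1. eventually (\<lambda>n. f n \<ge> c ^ n) sequentially)"

end

theory Submission imports Defs begin

definition epairs :: "nat set \<Rightarrow> (nat \<times> nat) set" where
  "epairs P = {(u,v). u \<in> P \<and> v \<in> P \<and> u < v}"

lemma prob_indep:
  assumes p: "0 \<le> p" "p \<le> 1" and P: "P \<subseteq> {0..<n}"
  shows "measure_pmf.prob (gnp n p) {G. indep_set G P} = (1-p) ^ card (epairs P)"
proof -
  define A where "A = vertex_pairs n"
  define B where "B = (\<lambda>e. if e \<in> epairs P then {False} else (UNIV::bool set))"
  have finA: "finite A" unfolding A_def vertex_pairs_def
    by (rule finite_subset[of _ "{..<n} \<times> {..<n}"]) auto
  have EA: "epairs P \<subseteq> A" using P unfolding A_def vertex_pairs_def epairs_def by auto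
  have S: "set_pmf (gnp n p) \<subseteq> {f. \<forall>x. x \<notin> A \<longrightarrow> f x = False}"
    unfolding gnp_def A_def by (rule set_Pi_pmf_subset) (use finA in \<open>simp add: A_def\<close>)
  have eq: "{G. indep_set G P} \<inter> set_pmf (gnp n p) = PiE_dflt A False B \<inter> set_pmf (gnp n p)"
  proof -
    have "indep_set G P \<longleftrightarrow> G \<in> PiE_dflt A False B" if "G \<in> set_pmf (gnp n p)" for G
    proof -
      have out: "\<forall>e. e \<notin> A \<longrightarrow> G e = False" using S that by blast
      have "indep_set G P \<longleftrightarrow> (\<forall>e\<in>epairs P. \<not> G e)" unfolding indep_set_def epairs_def by blast
      also have "\<dots> \<longleftrightarrow> G \<in> PiE_dflt A False B" unfolding PiE_dflt_def B_def using out EA by (auto simp: subset_iff)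
      finally show ?thesis .
    qed
    thus ?thesis by blast
  qed
  have "measure_pmf.prob (gnp n p) {G. indep_set G P} = measure_pmf.prob (gnp n p) ({G. indep_set G P} \<inter> set_pmf (gnp n p))"
    by (rule measure_Int_set_pmf[symmetric])
  also have "\<dots> = measure_pmf.prob (gnp n p) (PiE_dflt A False B \<inter> set_pmf (gnp n p))"
    by (simp only: eq)
  also have "\<dots> = measure_pmf.prob (gnp n p) (PiE_dflt A False B)"
    by (rule measure_Int_set_pmf)
  also have "\<dots> = (\<Prod>e\<in>A. measure_pmf.prob (bernoulli_pmf p) (B e))"
    unfolding gnp_def A_def by (rule measure_Pi_pmf_PiE_dflt) (use finA in \<open>simp add: A_def\<close>)
  also have "\<dots> = (\<Prod>e\<in>A. if e \<in> epairs P then 1 - p else 1)"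
  proof (rule prod.cong)
    fix e assume "e \<in> A"
    show "measure_pmf.prob (bernoulli_pmf p) (B e) = (if e \<in> epairs P then 1 - p else 1)"
    proof (cases "e \<in> epairs P")
      case True
      hence "measure_pmf.prob (bernoulli_pmf p) (B e) = pmf (bernoulli_pmf p) False"
        unfolding B_def by (simp add: measure_pmf_single)
      thus ?thesis using True p by simp
    next
      case False
      hence "B e = UNIV" unfolding B_def by simp
      thus ?thesis using False by simp
    qed
  qed simp
  also have "\<dots> = (1-p) ^ card (epairs P)"
    using finA EA by (simp add: prod.If_cases Int_absorb1)
  finally show ?thesis .
qed

lemma card_epairs: "finite P \<Longrightarrow> card (epairs P) = card P * (card P - 1) div 2"
proof (induction P rule: finite_linorder_max_induct)
  case empty thus ?case by (simp add: epairs_def)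
next
  case (insert b A)
  have bA: "b \<notin> A" using insert by auto
  have e: "epairs (insert b A) = epairs A \<union> (\<lambda>u. (u,b)) ` A"
    using insert(2) unfolding epairs_def by auto
  have fe: "finite (epairs A)" 
    by (rule finite_subset[of _ "A \<times> A"]) (auto simp: epairs_def insert)
  have d: "epairs A \<inter> (\<lambda>u. (u,b)) ` A = {}" using insert(2) unfolding epairs_def by auto
  have "card (epairs (insert b A)) = card (epairs A) + card A"
    unfolding e using fe insert(1) d by (subst card_Un_disjoint) (auto simp: card_image inj_on_def)
  also have "\<dots> = card A * (card A - 1) div 2 + card A" using insert by simp
  also have "\<dots> = card (insert b A) * (card (insert b A) - 1) div 2"
  proof -
    have "card (insert b A) = Suc (card A)" using insert bA by simp
    moreover have "Suc k * k div 2 = k * (k - 1) div 2 + k" for k :: nat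
    proof (cases k)
      case (Suc j)
      have "Suc k * k = k * (k - 1) + 2 * k" using Suc by (simp add: algebra_simps)
      thus ?thesis by simp
    qed simp
    ultimately show ?thesis by simp
  qed
  finally show ?case .
qed

definition U :: "nat \<Rightarrow> (nat \<times> nat set) set" where
  "U n = Sigma {..n} (\<lambda>i. Pow {0..<i})"

lemma finite_U: "finite (U n)" unfolding U_def by auto

lemma T_eq:
  assumes p: "0 \<le> p" "p \<le> 1"
  shows "T n p = (\<Sum>x\<in>U n. (1-p) ^ card (epairs (snd x)))"
proof -
  have c: "real (card (search_tree_nodes n G)) = (\<Sum>x\<in>U n. indicator {G. indep_set G (snd x)} G)" for G
  proof -
    have "search_tree_nodes n G = {x\<in>U n. indep_set G (snd x)}"
      unfolding search_tree_nodes_def U_def by auto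
    hence "real (card (search_tree_nodes n G)) = (\<Sum>x\<in>{x\<in>U n. indep_set G (snd x)}. 1::real)" by (simp only: real_of_card)
    also have "\<dots> = (\<Sum>x\<in>U n. if indep_set G (snd x) then 1 else 0)"
      by (rule sum.inter_filter[OF finite_U])
    finally show ?thesis by (simp add: indicator_def of_bool_def)
  qed
  have "T n p = measure_pmf.expectation (gnp n p) (\<lambda>G. \<Sum>x\<in>U n. indicator {G. indep_set G (snd x)} G)"
    unfolding T_def c ..
  also have "\<dots> = (\<Sum>x\<in>U n. measure_pmf.expectation (gnp n p) (indicator {G. indep_set G (snd x)}))"
    by (rule Bochner_Integration.integral_sum) (auto intro!: measure_pmf.integrable_const_bound[where B=1])
  also have "\<dots> = (\<Sum>x\<in>U n. (1-p) ^ card (epairs (snd x)))"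
  proof (rule sum.cong)
    fix x assume "x \<in> U n"
    hence "snd x \<subseteq> {0..<n}" unfolding U_def by auto
    thus "measure_pmf.expectation (gnp n p) (indicator {G. indep_set G (snd x)}) = (1-p) ^ card (epairs (snd x))"
      using prob_indep[OF p] by simp
  qed simp
  finally show ?thesis .
qed

lemma sum_Pow_pow: "finite A \<Longrightarrow> (\<Sum>P\<in>Pow A. (x::real) ^ card P) = (1+x) ^ card A"
proof (induction A rule: finite_induct)
  case empty thus ?case by simp
next
  case (insert a A)
  have d: "Pow A \<inter> insert a ` Pow A = {}" using insert by auto
  have inj: "inj_on (insert a) (Pow A)"
  proof (rule inj_onI)
    fix X Y assume X: "X \<in> Pow A" and Y: "Y \<in> Pow A" and e: "insert a X = insert a Y"
    have "X = insert a X - {a}" using X insert(2) by auto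
    also have "\<dots> = insert a Y - {a}" using e by simp
    also have "\<dots> = Y" using Y insert(2) by auto
    finally show "X = Y" .
  qed
  have fP: "finite (Pow A)" using insert by simp
  have "(\<Sum>P\<in>Pow (insert a A). x ^ card P) = (\<Sum>P\<in>Pow A \<union> insert a ` Pow A. x ^ card P)"
    by (simp only: Pow_insert)
  also have "\<dots> = (\<Sum>P\<in>Pow A. x ^ card P) + (\<Sum>P\<in>insert a ` Pow A. x ^ card P)"
    by (rule sum.union_disjoint) (use fP d in auto)
  also have "(\<Sum>P\<in>insert a ` Pow A. x ^ card P) = (\<Sum>P\<in>Pow A. x ^ card (insert a P))"
    by (rule sum.reindex[OF inj, unfolded comp_def])
  also have "\<dots> = (\<Sum>P\<in>Pow A. x * x ^ card P)"
  proof (rule sum.cong)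
    fix P assume "P \<in> Pow A" 
    hence "finite P" "a \<notin> P" using insert finite_subset by auto
    thus "x ^ card (insert a P) = x * x ^ card P" by simp
  qed simp
  also have "\<dots> = x * (1+x) ^ card A" by (simp only: sum_distrib_left[symmetric] insert.IH)
  finally have "(\<Sum>P\<in>Pow (insert a A). x ^ card P) = (1+x) ^ card A + x * (1+x) ^ card A"
    by (simp only: insert.IH)
  also have "\<dots> = (1+x) ^ card (insert a A)" using insert by (simp add: algebra_simps)
  finally show ?case .
qed

lemma term_bound:
  fixes p x :: real and j :: nat
  assumes p: "0 < p" "p \<le> 1" and x: "0 < x" "x \<le> 1"
  shows "(1-p) ^ (j*(j-1) div 2) \<le> x ^ j * exp ((1 - ln x)^2 / (2*p))"
proof -
  define L where "L = - ln x"
  have L0: "L \<ge> 0" using x by (simp add: L_def)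
  define m where "m = j*(j-1) div 2"
  have rm: "real m = real j * (real j - 1) / 2"
  proof (cases j)
    case (Suc i)
    have ev: "even (j*(j-1))" by (cases "even j") auto
    hence "2 * m = j*(j-1)" unfolding m_def by simp
    hence "2 * real m = real j * real (j-1)" by (metis of_nat_mult of_nat_numeral)
    moreover have "real (j-1) = real j - 1" using Suc by simp
    ultimately show ?thesis by simp
  qed (simp add: m_def)
  have "(1-p) ^ m \<le> exp (-p) ^ m"
    using p by (intro power_mono) (auto simp: exp_ge_add_one_self[of "-p", simplified])
  also have "\<dots> = exp (- p * real m)" by (simp add: exp_of_nat_mult[symmetric] mult.commute)
  also have "\<dots> \<le> exp (- L * real j + (1 - ln x)^2 / (2*p))"
  proof -
    have sq: "L*real j - p*real m = (L + p/2)^2/(2*p) - (p*real j - (L + p/2))^2/(2*p)"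
      unfolding rm using p by (simp add: field_simps power2_eq_square)
    have a: "0 \<le> (p*real j - (L + p/2))^2/(2*p)" using p by simp
    have "(L + p/2)^2 \<le> (1 - ln x)^2" using L0 p unfolding L_def
      by (intro power_mono) auto
    hence b: "(L + p/2)^2 / (2*p) \<le> (1 - ln x)^2 / (2*p)" using p by (intro divide_right_mono) auto
    have "- p * real m \<le> - L * real j + (1 - ln x)^2 / (2*p)"
      using sq a b by linarith
    thus ?thesis by simp
  qed
  also have "\<dots> = exp (- L) ^ j * exp ((1 - ln x)^2 / (2*p))"
    by (simp add: exp_add[symmetric] exp_of_nat_mult[symmetric] mult.commute)
  also have "exp (- L) = x" using x by (simp add: L_def)
  finally show ?thesis by (simp add: m_def)
qed

lemma T_upper:
  assumes p: "0 < p" "p \<le> 1" and x: "0 < x" "x \<le> 1"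
  shows "T n p \<le> (real n + 1) * (1+x)^n * exp ((1 - ln x)^2 / (2*p))"
proof -
  define K where "K = exp ((1 - ln x)^2 / (2*p))"
  have "T n p = (\<Sum>i\<le>n. \<Sum>P\<in>Pow {0..<i}. (1-p) ^ card (epairs P))"
  proof -
    have "T n p = (\<Sum>(i,P)\<in>U n. (1-p) ^ card (epairs P))" using p by (simp add: T_eq split_def)
    also have "\<dots> = (\<Sum>i\<le>n. \<Sum>P\<in>Pow {0..<i}. (1-p) ^ card (epairs P))"
      unfolding U_def by (rule sum.Sigma[symmetric]) auto
    finally show ?thesis .
  qed
  also have "\<dots> \<le> (\<Sum>i\<le>n. \<Sum>P\<in>Pow {0..<i}. x ^ card P * K)"
  proof (intro sum_mono)
    fix i :: nat and P assume "P \<in> Pow {0..<i}"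
    hence "finite P" by (meson finite_atLeastLessThan finite_subset PowD)
    thus "(1-p) ^ card (epairs P) \<le> x ^ card P * K"
      using term_bound[OF p x, of "card P"] by (simp add: card_epairs K_def)
  qed
  also have "\<dots> = (\<Sum>i\<le>n. (1+x)^i * K)"
    by (simp add: sum_distrib_right[symmetric] sum_Pow_pow)
  also have "\<dots> \<le> (\<Sum>i\<le>n. (1+x)^n * K)"
    using x by (intro sum_mono mult_right_mono power_increasing) (auto simp: K_def)
  also have "\<dots> = (real n + 1) * (1+x)^n * K" by simp
  finally show ?thesis by (simp add: K_def)
qed

lemma T_lower:
  assumes p: "0 \<le> p" "p \<le> 1" and m: "m \<le> n"
  shows "2 ^ m * (1-p) ^ (m*m) \<le> T n p"
proof -
  have "2 ^ m * (1-p) ^ (m*m) = (\<Sum>P\<in>Pow {0..<m}. (1-p) ^ (m*m))"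
    by (simp add: card_Pow)
  also have "\<dots> \<le> (\<Sum>P\<in>Pow {0..<m}. (1-p) ^ card (epairs P))"
  proof (intro sum_mono power_decreasing)
    fix P assume P: "P \<in> Pow {0..<m}"
    have "epairs P \<subseteq> {0..<m} \<times> {0..<m}" using P by (auto simp: epairs_def)
    hence "card (epairs P) \<le> card ({0..<m} \<times> {0..<m})" by (intro card_mono) auto
    thus "card (epairs P) \<le> m*m" by (simp add: card_cartesian_product)
  qed (use p in auto)
  also have "\<dots> \<le> (\<Sum>x\<in>U n. (1-p) ^ card (epairs (snd x)))"
  proof -
    have "(\<Sum>P\<in>Pow {0..<m}. (1-p) ^ card (epairs P)) = (\<Sum>x\<in>Pair n ` Pow {0..<m}. (1-p) ^ card (epairs (snd x)))"
      by (simp add: sum.reindex inj_on_def)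
    also have "\<dots> \<le> (\<Sum>x\<in>U n. (1-p) ^ card (epairs (snd x)))"
      using m p by (intro sum_mono2 finite_U) (auto simp: U_def)
    finally show ?thesis .
  qed
  also have "\<dots> = T n p" using p by (simp add: T_eq)
  finally show ?thesis .
qed


lemma poly_exp_ev:
  fixes a :: real assumes a: "a > 0"
  shows "eventually (\<lambda>n. real n + 1 \<le> exp (a * real n)) sequentially"
proof -
  have "eventually (\<lambda>n. 4 / a^2 \<le> real n) sequentially"
    by (rule eventually_sequentiallyI[of "nat \<lceil>4 / a^2\<rceil>"]) linarith
  thus ?thesis
  proof (rule eventually_mono)
    fix n assume n: "4 / a^2 \<le> real n"
    have y: "0 \<le> a * real n / 2" using a by simp
    have "real n \<le> a^2 * real n * real n / 4"
    proof -
      have "4 \<le> a^2 * real n" using n a by (simp add: field_simps)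
      hence "4 * real n \<le> a^2 * real n * real n" by (intro mult_right_mono[of _ _ "real n", simplified]) auto
      thus ?thesis by simp
    qed
    also have "\<dots> \<le> a * real n + a^2 * real n * real n / 4" using a by simp
    finally have "real n + 1 \<le> (1 + a * real n / 2)^2" by (simp add: power2_eq_square algebra_simps)
    also have "\<dots> \<le> exp (a * real n / 2) ^ 2"
      using y by (intro power_mono) (auto simp: exp_ge_add_one_self)
    also have "\<dots> = exp (a * real n)" by (simp add: exp_double[symmetric] power2_eq_square exp_add[symmetric])
    finally show "real n + 1 \<le> exp (a * real n)" .
  qed
qed

lemma sub_gen:
  fixes p :: "nat \<Rightarrow> real"
  assumes ev: "eventually (\<lambda>n. 0 < p n \<and> p n \<le> 1) sequentially"
    and lim: "filterlim (\<lambda>n. p n * real n) at_top sequentially"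
  shows "subexponential (\<lambda>n. T n (p n))"
  unfolding subexponential_def
proof (intro allI impI)
  fix \<epsilon> :: real assume e: "\<epsilon> > 0"
  define x where "x = min 1 (\<epsilon>/3)"
  define C where "C = (1 - ln x)^2 / 2"
  have x: "0 < x" "x \<le> 1" "x \<le> \<epsilon>/3" using e by (auto simp: x_def)
  have C0: "C \<ge> 0" by (simp add: C_def)
  have e1: "eventually (\<lambda>n. C * 3 / \<epsilon> \<le> p n * real n) sequentially"
    using lim by (simp add: filterlim_at_top)
  have e2: "eventually (\<lambda>n. real n + 1 \<le> exp (\<epsilon>/3 * real n)) sequentially"
    by (rule poly_exp_ev) (use e in simp)
  show "eventually (\<lambda>n. T n (p n) \<le> exp (\<epsilon> * real n)) sequentially"
    using ev e1 e2
  proof (eventually_elim)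
    case (elim n)
    have p: "0 < p n" "p n \<le> 1" using elim by auto
    have "T n (p n) \<le> (real n + 1) * (1+x)^n * exp (C / p n)"
      using T_upper[OF p x(1,2), of n] by (simp add: C_def field_simps)
    also have "\<dots> \<le> exp (\<epsilon>/3 * real n) * exp (\<epsilon>/3 * real n) * exp (\<epsilon>/3 * real n)"
    proof (intro mult_mono)
      show "real n + 1 \<le> exp (\<epsilon>/3 * real n)" using elim by simp
      have "(1+x)^n \<le> exp x ^ n" using x by (intro power_mono) (auto simp: exp_ge_add_one_self add.commute)
      also have "\<dots> = exp (x * real n)" by (simp add: exp_of_nat_mult[symmetric] mult.commute)
      also have "\<dots> \<le> exp (\<epsilon>/3 * real n)" using x by (intro exp_mono mult_right_mono) auto
      finally show "(1+x)^n \<le> exp (\<epsilon>/3 * real n)" .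
      have "C * 3 \<le> \<epsilon> * (p n * real n)" using elim e by (simp add: field_simps)
      hence "C / p n \<le> \<epsilon>/3 * real n" using p by (simp add: field_simps)
      thus "exp (C / p n) \<le> exp (\<epsilon>/3 * real n)" by simp
    qed (use x in auto)
    also have "\<dots> = exp (\<epsilon> * real n)" by (simp add: exp_add[symmetric])
    finally show ?case .
  qed
qed


lemma exp_part:
  fixes k :: real assumes k: "k > 0"
  shows "exponential (\<lambda>n. T n (k / real n))"
  unfolding exponential_def
proof -
  define d :: nat where "d = nat \<lceil>4*k/ln 2\<rceil> + 1"
  have d1: "d \<ge> 1" by (simp add: d_def)
  have dk: "4*k \<le> real d * ln 2"
  proof -
    have "4*k/ln 2 \<le> real d" unfolding d_def by linarith
    thus ?thesis by (simp add: field_simps)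
  qed
  define c where "c = exp (ln 2 / (4 * real d))"
  have c1: "c > 1" unfolding c_def using d1 by simp
  have ev: "eventually (\<lambda>n. 2*k \<le> real n \<and> 2*d \<le> n) sequentially"
    by (rule eventually_sequentiallyI[of "nat \<lceil>2*k\<rceil> + 2*d"]) linarith
  have "eventually (\<lambda>n. c ^ n \<le> T n (k / real n)) sequentially"
    using ev
  proof (rule eventually_mono)
    fix n :: nat assume n: "2*k \<le> real n \<and> 2*d \<le> n"
    define p where "p = k / real n"
    define m where "m = n div d"
    have npos: "real n > 0" using n k by linarith
    have p0: "0 < p" "p \<le> 1/2" using n k npos by (auto simp: p_def field_simps)
    have mn: "m \<le> n" by (simp add: m_def)
    have dm: "d * m \<le> n" unfolding m_def by (metis div_times_less_eq_dividend mult.commute)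
    have dm2: "n \<le> 2 * d * m"
    proof -
      have "n = d * m + n mod d" by (simp add: m_def)
      moreover have "n mod d < d" using d1 by simp
      ultimately show ?thesis using n by linarith
    qed
    have rdm: "real d * real m \<le> real n" using dm by (metis of_nat_le_iff of_nat_mult)
    have rdm2: "real n \<le> 2 * real d * real m" using dm2 by (metis of_nat_le_iff of_nat_mult of_nat_numeral)
    have lnp: "-2*p \<le> ln (1-p)"
    proof -
      have "p * (2*p) \<le> p * 1" using p0 by (intro mult_left_mono) auto
      hence "2 * p^2 \<le> p" by (simp add: power2_eq_square)
      moreover have "- p - 2 * p^2 \<le> ln (1-p)" using ln_one_minus_pos_lower_bound[of p] p0 by simp
      ultimately show ?thesis by linarith
    qed
    have q: "exp (-2*p) \<le> 1 - p"
    proof -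
      have "exp (-2*p) \<le> exp (ln (1-p))" using lnp by simp
      also have "exp (ln (1-p)) = 1-p" using p0 by simp
      finally show ?thesis .
    qed
    have "c ^ n = exp (real n * (ln 2 / (4 * real d)))" unfolding c_def by (rule exp_of_nat_mult[symmetric])
    also have "\<dots> \<le> exp (ln 2 * real m - 2*p * real (m*m))"
    proof (rule exp_mono)
      have l2: "ln (2::real) > 0" by simp
      have A: "real n * (ln 2 / (4 * real d)) \<le> ln 2 * real m / 2"
        using rdm2 d1 l2 by (simp add: field_simps)
      have "2*p*real (m*m) = 2*k*real m * (real m / real n)" by (simp add: p_def field_simps)
      also have "\<dots> \<le> 2*k*real m * (1 / real d)"
        using rdm d1 npos k by (intro mult_left_mono) (auto simp: field_simps)
      also have "\<dots> \<le> ln 2 * real m / 2"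
      proof -
        have "4*k*real m \<le> real d * ln 2 * real m" using dk by (rule mult_right_mono) simp
        thus ?thesis using d1 by (simp add: field_simps)
      qed
      finally show "real n * (ln 2 / (4 * real d)) \<le> ln 2 * real m - 2*p * real (m*m)" using A by linarith
    qed
    also have "\<dots> = exp (ln 2 * real m) * exp (-2*p) ^ (m*m)"
      by (simp add: exp_add[symmetric] exp_of_nat_mult[symmetric] algebra_simps)
    also have "exp (ln 2 * real m) = (2::real) ^ m"
    proof -
      have "exp (real m * ln 2) = exp (ln 2) ^ m" by (rule exp_of_nat_mult)
      thus ?thesis by (simp add: mult.commute)
    qed
    also have "2 ^ m * exp (-2*p) ^ (m*m) \<le> 2 ^ m * (1-p) ^ (m*m)"
      using q by (intro mult_left_mono power_mono) auto
    also have "\<dots> \<le> T n p" using p0 mn by (intro T_lower) auto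
    finally show "c ^ n \<le> T n (k / real n)" by (simp add: p_def)
  qed
  thus "\<exists>c>1. eventually (\<lambda>n. c ^ n \<le> T n (k / real n)) sequentially" using c1 by blast
qed


theorem theorem1:
  shows "(\<forall>p::real. 0 < p \<and> p \<le> 1 \<longrightarrow> subexponential (\<lambda>n. T n p))
    \<and> (\<forall>\<phi>::nat \<Rightarrow> real. \<phi> \<in> o(\<lambda>n. real n) \<and> filterlim \<phi> at_top sequentially
          \<longrightarrow> subexponential (\<lambda>n. T n (\<phi> n / real n)))
    \<and> (\<forall>k::real. k > 0 \<longrightarrow> exponential (\<lambda>n. T n (k / real n)))"
proof (intro conjI allI impI)
  fix p :: real assume p: "0 < p \<and> p \<le> 1"
  show "subexponential (\<lambda>n. T n p)"
  proof (rule sub_gen[where p="\<lambda>_. p"])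
    show "eventually (\<lambda>n. 0 < p \<and> p \<le> 1) sequentially" using p by simp
    show "filterlim (\<lambda>n. p * real n) at_top sequentially"
      by (rule filterlim_tendsto_pos_mult_at_top[OF tendsto_const _ filterlim_real_sequentially]) (use p in simp)
  qed
next
  fix \<phi> :: "nat \<Rightarrow> real" assume a: "\<phi> \<in> o(\<lambda>n. real n) \<and> filterlim \<phi> at_top sequentially"
  have e1: "eventually (\<lambda>n. norm (\<phi> n) \<le> 1 * norm (real n)) sequentially"
    using a by (intro landau_o.smallD) auto
  have e2: "eventually (\<lambda>n. 1 \<le> \<phi> n) sequentially" using a by (simp add: filterlim_at_top)
  have e3: "eventually (\<lambda>n. 0 < n) sequentially" by (rule eventually_gt_at_top)
  show "subexponential (\<lambda>n. T n (\<phi> n / real n))"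
  proof (rule sub_gen)
    show "eventually (\<lambda>n. 0 < \<phi> n / real n \<and> \<phi> n / real n \<le> 1) sequentially"
      using e1 e2 e3 by eventually_elim (auto simp: field_simps)
    show "filterlim (\<lambda>n. \<phi> n / real n * real n) at_top sequentially"
      unfolding filterlim_at_top
    proof
      fix Z
      have "eventually (\<lambda>n. Z \<le> \<phi> n) sequentially" using a by (simp add: filterlim_at_top)
      thus "eventually (\<lambda>n. Z \<le> \<phi> n / real n * real n) sequentially"
        using e3 by eventually_elim simp
    qed
  qed
next
  fix k :: real assume "k > 0"
  thus "exponential (\<lambda>n. T n (k / real n))" by (rule exp_part)
qed

end
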